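(* For $n\ge 0$, let $CP_n$ be the clawed path with respect to a path of length $n$. Then $M_2(CP_n)\simeq S^{2n+1}$.
   Context: A path of length $n$ has $n$ edges and $n+1$ vertices (for $n=0$ it is a single vertex). For a graph $G$ of maximum degree at most $3$, the clawed graph $CG$ is obtained by subdividing every edge of $G$ (replacing $\{u,v\}$ by a new vertex $w$ and edges $\{u,w\},\{w,v\}$) and then attaching new leaves to every original vertex so that every original vertex has degree exactly $3$; $CP_n$ is the clawed graph of the path of length $n$ (so $CP_0=K_{1,3}$). $M_2(G)$ is the simplicial complex whose vertices are the edges of $G$ and whose faces are the $2$-matchings of $G$ (edge sets in which every vertex has degree at most $2$). *)

theory Defs
  imports "HOL-Analysis.Analysis"
begin

text \<open>Simple graphs are given by a vertex set V and a set E of 2-element subsets of V.\<close>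

definition degree :: "'a set set \<Rightarrow> 'a \<Rightarrow> nat" where
  "degree E v = card {e \<in> E. v \<in> e}"

text \<open>Vertices of the clawed graph: original vertices, subdivision vertices (one per edge),
  and new leaves (Leaf v j is the j-th leaf attached to v).\<close>
datatype 'a cvert = Orig 'a | Sub "'a set" | Leaf 'a nat

definition clawed_edges :: "'a set \<Rightarrow> 'a set set \<Rightarrow> 'a cvert set set" where
  "clawed_edges V E =
     {{Orig u, Sub e} | u e. e \<in> E \<and> u \<in> e}
     \<union> {{Orig v, Leaf v j} | v j. v \<in> V \<and> j < 3 - degree E v}"

definition path_vertices :: "nat \<Rightarrow> nat set" where
  "path_vertices n = {0..n}"

definition path_edges :: "nat \<Rightarrow> nat set set" where
  "path_edges n = {{i, Suc i} | i. i < n}"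

definition CP_edges :: "nat \<Rightarrow> nat cvert set set" where
  "CP_edges n = clawed_edges (path_vertices n) (path_edges n)"

definition two_matching_complex :: "'v set set \<Rightarrow> 'v set set set" where
  "two_matching_complex E = {F. F \<subseteq> E \<and> (\<forall>v. card {e \<in> F. v \<in> e} \<le> 2)}"

text \<open>Geometric realization of an abstract (finite) simplicial complex K with vertex type 'b:
  points are barycentric-coordinate functions whose support is a face of K,
  topologized as a subspace of the product space of real-valued functions.\<close>
definition realization_set :: "'b set set \<Rightarrow> ('b \<Rightarrow> real) set" where
  "realization_set K = {f. (\<forall>x. 0 \<le> f x) \<and> {x. f x \<noteq> 0} \<in> K \<and> sum f {x. f x \<noteq> 0} = 1}"

definition geometric_realization :: "'b set set \<Rightarrow> ('b \<Rightarrow> real) topology" where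
  "geometric_realization K = subtopology (powertop_real UNIV) (realization_set K)"

end

theory Submission
  imports Defs
begin


locale clawcx =
  fixes n :: nat and ee :: "nat \<Rightarrow> nat \<Rightarrow> 'b"
  assumes inj: "\<And>i k i' k'. i \<le> n \<Longrightarrow> k < 3 \<Longrightarrow> i' \<le> n \<Longrightarrow> k' < 3 \<Longrightarrow> ee i k = ee i' k' \<Longrightarrow> i = i' \<and> k = k'"
begin

definition "EE = (\<lambda>(i,k). ee i k) ` ({..n} \<times> {..<3})"
definition "KK = {F. F \<subseteq> EE \<and> (\<forall>i\<le>n. \<exists>k<3. ee i k \<notin> F)}"

lemma inj_on_ee: "inj_on (\<lambda>(i,k). ee i k) ({..n} \<times> {..<3})"
  using inj by (auto simp: inj_on_def)

lemma finite_EE: "finite EE" by (simp add: EE_def)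

lemma ee_in: "i \<le> n \<Longrightarrow> k < 3 \<Longrightarrow> ee i k \<in> EE" by (auto simp: EE_def)

lemma sum_EE: "sum g EE = (\<Sum>i\<le>n. \<Sum>k<3. g (ee i k))"
proof -
  have "sum g EE = sum (g \<circ> (\<lambda>(i,k). ee i k)) ({..n} \<times> {..<3})"
    unfolding EE_def by (rule sum.reindex[OF inj_on_ee])
  also have "\<dots> = (\<Sum>i\<le>n. \<Sum>k<3. g (ee i k))"
    by (simp add: sum.cartesian_product case_prod_unfold)
  finally show ?thesis .
qed

definition "pp = inv_into ({..n} \<times> {..<3}) (\<lambda>(i,k). ee i k)"

lemma pp_ee: "i \<le> n \<Longrightarrow> k < 3 \<Longrightarrow> pp (ee i k) = (i,k)"
  unfolding pp_def using inv_into_f_f[OF inj_on_ee, of "(i,k)"] by auto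

definition "DD f j = (if j < 2*n+2 then f (ee (j div 2) (j mod 2)) - f (ee (j div 2) 2) else 0)"
definition "NN f = sqrt (\<Sum>j<2*n+2. (DD f j)^2)"
definition "Phi f = (\<lambda>j. DD f j / NN f)"

definition "xp x (i::nat) (k::nat) = (if k < 2 then x (2*i+k) else (0::real))"
definition "mm x (i::nat) = min (min (x (2*i)) (x (2*i+1))) (0::real)"
definition "Hc x i k = xp x i k - mm x i"
definition "HH x e = (if e \<in> EE then (case pp e of (i,k) \<Rightarrow> Hc x i k) else 0)"
definition "TT x = (\<Sum>i\<le>n. \<Sum>k<3. Hc x i k)"
definition "Psi x = (\<lambda>e. HH x e / TT x)"

lemma HH_ee: "i \<le> n \<Longrightarrow> k < 3 \<Longrightarrow> HH x (ee i k) = Hc x i k"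
  by (simp add: HH_def ee_in pp_ee)

lemma Hc_nonneg: "Hc x i k \<ge> 0"
proof -
  have "k < 2 \<Longrightarrow> k = 0 \<or> k = 1" by arith
  then show ?thesis by (auto simp: Hc_def xp_def mm_def)
qed

lemma realD:
  assumes "f \<in> realization_set KK"
  shows "\<And>e. f e \<ge> 0" "\<And>e. e \<notin> EE \<Longrightarrow> f e = 0"
    "\<And>i. i \<le> n \<Longrightarrow> \<exists>k<3. f (ee i k) = 0" "sum f EE = 1"
proof -
  have f: "\<forall>x. 0 \<le> f x" "{x. f x \<noteq> 0} \<subseteq> EE" "\<forall>i\<le>n. \<exists>k<3. ee i k \<notin> {x. f x \<noteq> 0}"
     "sum f {x. f x \<noteq> 0} = 1"
    using assms by (auto simp: realization_set_def KK_def)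
  show "\<And>e. f e \<ge> 0" using f by auto
  show "\<And>e. e \<notin> EE \<Longrightarrow> f e = 0" using f by auto
  show "\<And>i. i \<le> n \<Longrightarrow> \<exists>k<3. f (ee i k) = 0" using f by auto
  have "sum f {x. f x \<noteq> 0} = sum f EE"
    by (rule sum.mono_neutral_left[OF finite_EE f(2)]) auto
  then show "sum f EE = 1" using f by simp
qed

lemma DD_even: "i \<le> n \<Longrightarrow> DD f (2*i) = f (ee i 0) - f (ee i 2)"
  by (simp add: DD_def)
lemma DD_odd: "i \<le> n \<Longrightarrow> DD f (2*i+1) = f (ee i 1) - f (ee i 2)"
  by (simp add: DD_def)

lemma split_j: "j < 2*n+2 \<Longrightarrow> j = 2*(j div 2) + j mod 2 \<and> j div 2 \<le> n \<and> j mod 2 < 2"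
  by auto

lemma NN_pos:
  assumes "f \<in> realization_set KK" shows "NN f > 0"
proof (rule ccontr)
  assume "\<not> NN f > 0"
  hence "(\<Sum>j<2*n+2. (DD f j)^2) \<le> 0" unfolding NN_def by simp
  hence z: "\<forall>j\<in>{..<2*n+2}. (DD f j)^2 = 0"
    using sum_nonneg_eq_0_iff[of "{..<2*n+2}" "\<lambda>j. (DD f j)^2"] 
    by (metis (no_types, lifting) antisym finite_lessThan sum_nonneg zero_le_power2)
  have "\<forall>i\<le>n. \<forall>k<3. f (ee i k) = 0"
  proof (intro allI impI)
    fix i k assume i: "i \<le> n" and k: "k < (3::nat)"
    have "DD f (2*i) = 0" "DD f (2*i+1) = 0" using z i by auto
    hence "f (ee i 0) = f (ee i 2)" "f (ee i 1) = f (ee i 2)" using DD_even[OF i, of f] DD_odd[OF i, of f] by auto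
    moreover obtain k' where "k' < 3" "f (ee i k') = 0" using realD(3)[OF assms i] by auto
    moreover have "k' = 0 \<or> k' = 1 \<or> k' = 2" using \<open>k' < 3\<close> by arith
    ultimately have "f (ee i 0) = 0" "f (ee i 1) = 0" "f (ee i 2) = 0"
      by auto
    moreover have "k = 0 \<or> k = 1 \<or> k = 2" using k by arith
    ultimately show "f (ee i k) = 0" by auto
  qed
  hence "sum f EE = 0" by (simp add: sum_EE)
  with realD(4)[OF assms] show False by simp
qed

definition "SS = {x::nat\<Rightarrow>real. (\<Sum>i\<le>2*n+1. x i ^ 2) = 1 \<and> (\<forall>i>2*n+1. x i = 0)}"

lemma atMost_eq: "{..2*n+1} = {..<2*n+2}" by auto

lemma TT_pos:
  assumes "x \<in> SS" shows "TT x > 0"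
proof -
  have ge: "TT x \<ge> 0" unfolding TT_def by (intro sum_nonneg Hc_nonneg)
  show ?thesis
  proof (rule ccontr)
    assume "\<not> TT x > 0"
    hence "TT x = 0" using ge by simp
    hence "\<forall>i\<in>{..n}. (\<Sum>k<3. Hc x i k) = 0"
      unfolding TT_def by (subst sum_nonneg_eq_0_iff[symmetric]) (auto intro: sum_nonneg Hc_nonneg)
    hence z: "\<forall>i\<le>n. \<forall>k<3. Hc x i k = 0"
      by (subst (asm) sum_nonneg_eq_0_iff) (auto intro: Hc_nonneg)
    have "\<forall>j<2*n+2. x j = 0"
    proof (intro allI impI)
      fix j assume j: "j < 2*n+2"
      define i where "i = j div 2"
      have i: "i \<le> n" using j i_def by auto
      have "Hc x i 0 = 0" "Hc x i 1 = 0" "Hc x i 2 = 0" using z i by auto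
      hence "x (2*i) = 0" "x (2*i+1) = 0" by (auto simp: Hc_def xp_def mm_def)
      moreover have "j = 2*i \<or> j = 2*i+1" using i_def by auto
      ultimately show "x j = 0" by auto
    qed
    hence "(\<Sum>i\<le>2*n+1. x i ^ 2) = 0" by (simp add: atMost_eq)
    with assms show False by (simp add: SS_def)
  qed
qed

lemma Phi_in:
  assumes "f \<in> realization_set KK" shows "Phi f \<in> SS"
proof -
  have N: "NN f > 0" by (rule NN_pos[OF assms])
  have "(\<Sum>j\<le>2*n+1. (Phi f j)^2) = (\<Sum>j<2*n+2. (DD f j)^2) / (NN f)^2"
    unfolding atMost_eq Phi_def by (simp only: power_divide sum_divide_distrib)
  also have "(NN f)^2 = (\<Sum>j<2*n+2. (DD f j)^2)" unfolding NN_def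
    by (simp add: sum_nonneg)
  finally have "(\<Sum>j\<le>2*n+1. (Phi f j)^2) = 1" using N NN_def by auto
  moreover have "\<forall>j>2*n+1. Phi f j = 0" by (simp add: Phi_def DD_def)
  ultimately show ?thesis by (simp add: SS_def)
qed

lemma Psi_in:
  assumes "x \<in> SS" shows "Psi x \<in> realization_set KK"
proof -
  have T: "TT x > 0" by (rule TT_pos[OF assms])
  have nn: "\<forall>e. 0 \<le> Psi x e" using T by (simp add: Psi_def HH_def Hc_nonneg split: prod.split)
  have sub: "{e. Psi x e \<noteq> 0} \<subseteq> EE" by (auto simp: Psi_def HH_def)
  have zero: "\<forall>i\<le>n. \<exists>k<3. Psi x (ee i k) = 0"
  proof (intro allI impI)
    fix i assume i: "i \<le> n"
    have "Hc x i 0 = 0 \<or> Hc x i 1 = 0 \<or> Hc x i 2 = 0"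
      by (auto simp: Hc_def xp_def mm_def min_def)
    then show "\<exists>k<3. Psi x (ee i k) = 0"
    proof (elim disjE)
      assume "Hc x i 0 = 0" then show ?thesis using i by (intro exI[of _ 0]) (simp add: Psi_def HH_ee)
    next
      assume "Hc x i 1 = 0" then show ?thesis using i by (intro exI[of _ 1]) (simp add: Psi_def HH_ee)
    next
      assume "Hc x i 2 = 0" then show ?thesis using i by (intro exI[of _ 2]) (simp add: Psi_def HH_ee)
    qed
  qed
  have "sum (Psi x) {e. Psi x e \<noteq> 0} = sum (Psi x) EE"
    by (rule sum.mono_neutral_left[OF finite_EE sub]) auto
  also have "\<dots> = (\<Sum>i\<le>n. \<Sum>k<3. Hc x i k / TT x)"
    by (simp add: sum_EE Psi_def HH_ee)
  also have "\<dots> = TT x / TT x" by (simp only: TT_def sum_divide_distrib[symmetric])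
  also have "\<dots> = 1" using T by simp
  finally show ?thesis using nn sub zero by (auto simp: realization_set_def KK_def)
qed

lemma min3_lemma:
  fixes a b c N :: real
  assumes "a \<ge> 0" "b \<ge> 0" "c \<ge> 0" "a = 0 \<or> b = 0 \<or> c = 0" "N > 0"
  shows "min (min ((a - c)/N) ((b - c)/N)) 0 = - c / N"
proof -
  have "(a - c)/N \<ge> - c/N" "(b - c)/N \<ge> - c/N" "0 \<ge> - c/N"
    using assms by (auto simp: field_simps)
  moreover have "(a - c)/N = - c/N \<or> (b - c)/N = - c/N \<or> 0 = - c/N"
    using assms by auto
  ultimately show ?thesis by linarith
qed

lemma Psi_Phi:
  assumes f: "f \<in> realization_set KK" shows "Psi (Phi f) = f"
proof
  fix e
  have N: "NN f > 0" by (rule NN_pos[OF f])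
  have Hc: "Hc (Phi f) i k = f (ee i k) / NN f" if i: "i \<le> n" and k: "k < 3" for i k
  proof -
    obtain k' where k': "k' < 3" "f (ee i k') = 0" using realD(3)[OF f i] by auto
    have "k' = 0 \<or> k' = 1 \<or> k' = 2" using k' by arith
    hence z: "f (ee i 0) = 0 \<or> f (ee i 1) = 0 \<or> f (ee i 2) = 0" using k' by auto
    have m: "mm (Phi f) i = - f (ee i 2) / NN f"
      unfolding mm_def Phi_def using DD_even[OF i, of f] DD_odd[OF i, of f]
        min3_lemma[OF realD(1)[OF f] realD(1)[OF f] realD(1)[OF f] z N] by simp
    have "k = 0 \<or> k = 1 \<or> k = 2" using k by arith
    then show ?thesis using m DD_even[OF i, of f] DD_odd[OF i, of f]
      by (auto simp: Hc_def xp_def Phi_def diff_divide_distrib)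
  qed
  have T: "TT (Phi f) = 1 / NN f"
  proof -
    have "TT (Phi f) = (\<Sum>i\<le>n. \<Sum>k<3. f (ee i k) / NN f)"
      unfolding TT_def by (intro sum.cong refl) (simp add: Hc)
    also have "\<dots> = sum f EE / NN f" by (simp add: sum_EE sum_divide_distrib)
    finally show ?thesis using realD(4)[OF f] by simp
  qed
  show "Psi (Phi f) e = f e"
  proof (cases "e \<in> EE")
    case True
    then obtain i k where ik: "i \<le> n" "k < 3" "e = ee i k" unfolding EE_def by auto
    then show ?thesis using N by (simp add: Psi_def HH_ee Hc T)
  next
    case False
    then show ?thesis using realD(2)[OF f] by (simp add: Psi_def HH_def)
  qed
qed

lemma Phi_Psi:
  assumes x: "x \<in> SS" shows "Phi (Psi x) = x"
proof
  fix j
  have T: "TT x > 0" by (rule TT_pos[OF x])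
  have D: "DD (Psi x) j = (if j < 2*n+2 then x j / TT x else 0)" for j
  proof (cases "j < 2*n+2")
    case True
    define i where "i = j div 2"
    have i: "i \<le> n" using True i_def by auto
    have "j mod 2 < 2" by simp
    hence "j mod 2 < 3" by arith
    then have "DD (Psi x) j = (Hc x i (j mod 2) - Hc x i 2) / TT x"
      using True i by (simp add: DD_def Psi_def HH_ee i_def diff_divide_distrib)
    also have "\<dots> = x (2*i + j mod 2) / TT x"
      by (simp add: Hc_def xp_def)
    also have "2*i + j mod 2 = j" using i_def by simp
    finally show ?thesis using True by simp
  qed (simp add: DD_def)
  have "(\<Sum>j<2*n+2. (DD (Psi x) j)^2) = (\<Sum>j<2*n+2. (x j)^2 / (TT x)^2)"
    by (intro sum.cong) (auto simp: D power_divide)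
  also have "\<dots> = (\<Sum>j<2*n+2. (x j)^2) / (TT x)^2" by (simp only: sum_divide_distrib)
  finally have "NN (Psi x) = sqrt ((\<Sum>j<2*n+2. (x j)^2) / (TT x)^2)"
    unfolding NN_def by simp
  also have "(\<Sum>j<2*n+2. (x j)^2) = 1" using x unfolding SS_def atMost_eq by simp
  finally have N: "NN (Psi x) = 1 / TT x" using T by (simp add: real_sqrt_divide)
  show "Phi (Psi x) j = x j"
  proof (cases "j < 2*n+2")
    case True then show ?thesis using T by (simp add: Phi_def D N)
  next
    case False then show ?thesis using x by (simp add: Phi_def D SS_def)
  qed
qed

lemma topX: "topspace (geometric_realization KK) = realization_set KK"
  by (simp add: geometric_realization_def)

lemma Y_eq: "nsphere (2*n+1) = subtopology (powertop_real UNIV) SS"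
  by (simp add: nsphere SS_def)

lemma topY: "topspace (nsphere (2*n+1)) = SS"
  by (subst Y_eq) simp

lemma proj_cont: "continuous_map (subtopology (powertop_real UNIV) A) euclideanreal (\<lambda>f. f e)"
  by (intro continuous_map_from_subtopology continuous_map_product_projection) simp

lemma DD_cont: "continuous_map (subtopology (powertop_real UNIV) A) euclideanreal (\<lambda>f. DD f j)"
proof (cases "j < 2*n+2")
  case True
  then show ?thesis unfolding DD_def by (simp add: continuous_map_diff proj_cont)
qed (simp add: DD_def)

lemma NN_cont: "continuous_map (subtopology (powertop_real UNIV) A) euclideanreal NN"
  unfolding NN_def
  by (intro continuous_map_sqrt continuous_map_sum continuous_map_real_pow DD_cont) auto

lemma Phi_cont: "continuous_map (geometric_realization KK) (nsphere (2*n+1)) Phi"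
proof -
  have "continuous_map (geometric_realization KK) (powertop_real UNIV) Phi"
    unfolding continuous_map_componentwise_UNIV
  proof
    fix j
    show "continuous_map (geometric_realization KK) euclideanreal (\<lambda>f. Phi f j)"
      unfolding Phi_def geometric_realization_def
      by (intro continuous_map_real_divide DD_cont NN_cont)
         (force dest: NN_pos)
  qed
  moreover have "Phi ` topspace (geometric_realization KK) \<subseteq> SS"
    using Phi_in topX by auto
  ultimately show ?thesis by (subst Y_eq) (auto simp add: continuous_map_in_subtopology)
qed

lemma Hc_cont: "continuous_map (subtopology (powertop_real UNIV) A) euclideanreal (\<lambda>x. Hc x i k)"
proof (cases "k < 2")
  case True
  then show ?thesis unfolding Hc_def xp_def mm_def
    by (simp add: continuous_map_diff continuous_map_real_min proj_cont)
next
  case False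
  then show ?thesis unfolding Hc_def xp_def mm_def
    by (simp add: continuous_map_real_min proj_cont)
qed

lemma Psi_cont: "continuous_map (nsphere (2*n+1)) (geometric_realization KK) Psi"
proof -
  have "continuous_map (nsphere (2*n+1)) (powertop_real UNIV) Psi"
    unfolding continuous_map_componentwise_UNIV
  proof
    fix e
    have H: "continuous_map (nsphere (2*n+1)) euclideanreal (\<lambda>x. HH x e)"
    proof (cases "e \<in> EE")
      case True
      then obtain i k where "pp e = (i,k)" by (cases "pp e") auto
      then show ?thesis using True unfolding HH_def Y_eq by (simp add: Hc_cont)
    qed (simp add: HH_def)
    have T: "continuous_map (nsphere (2*n+1)) euclideanreal TT"
      unfolding TT_def Y_eq by (intro continuous_map_sum Hc_cont) auto
    show "continuous_map (nsphere (2*n+1)) euclideanreal (\<lambda>x. Psi x e)"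
      unfolding Psi_def
      by (intro continuous_map_real_divide H T) (use topY in \<open>force dest: TT_pos\<close>)
  qed
  moreover have "Psi ` topspace (nsphere (2*n+1)) \<subseteq> realization_set KK"
    using Psi_in topY by auto
  ultimately show ?thesis unfolding geometric_realization_def continuous_map_in_subtopology by blast
qed

lemma main_abstract: "geometric_realization KK homeomorphic_space nsphere (2*n+1)"
  unfolding homeomorphic_space_def homeomorphic_maps_def
  by (intro exI[of _ Phi] exI[of _ Psi] conjI Phi_cont Psi_cont ballI)
     (auto simp only: topX topY Psi_Phi Phi_Psi)

end


definition cpe :: "nat \<Rightarrow> nat \<Rightarrow> nat \<Rightarrow> nat cvert set" where
  "cpe n i k = (if k = 0 then {Orig i, Leaf i 0}
     else if k = 1 then (if 0 < i then {Orig i, Sub {i - 1, i}} else {Orig i, Leaf i 1})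
     else (if i < n then {Orig i, Sub {i, Suc i}} else {Orig i, Leaf i (if 0 < i then 1 else 2)}))"

lemma cpe_Orig: "Orig j \<in> cpe n i k \<longleftrightarrow> j = i"
  by (auto simp: cpe_def)

lemma cpe_inj: "i \<le> n \<Longrightarrow> k < 3 \<Longrightarrow> i' \<le> n \<Longrightarrow> k' < 3 \<Longrightarrow> cpe n i k = cpe n i' k' \<Longrightarrow> i = i' \<and> k = k'"
proof -
  assume a: "i \<le> n" "k < 3" "i' \<le> n" "k' < 3" "cpe n i k = cpe n i' k'"
  have ii: "i = i'" using a(5) cpe_Orig[of i n i k] cpe_Orig[of i n i' k'] by auto
  have "k = 0 \<or> k = 1 \<or> k = 2" "k' = 0 \<or> k' = 1 \<or> k' = 2" using a by arith+
  then show ?thesis using a(5) ii by (auto simp: cpe_def doubleton_eq_iff split: if_splits)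
qed

interpretation cp: clawcx n "cpe n"
  by unfold_locales (rule cpe_inj)

lemma path_inc: "v \<le> n \<Longrightarrow> {e \<in> path_edges n. v \<in> e} =
   (if 0 < v then {{v - 1, v}} else {}) \<union> (if v < n then {{v, Suc v}} else {})"
  unfolding path_edges_def by (auto split: if_splits)

lemma deg_path: "v \<le> n \<Longrightarrow> degree (path_edges n) v = (if 0 < v then 1 else 0) + (if v < n then 1 else 0)"
  unfolding degree_def path_inc by (auto simp: doubleton_eq_iff)

lemma CP_sub: "CP_edges n \<subseteq> cp.EE n"
proof
  fix x assume "x \<in> CP_edges n"
  then consider (s) u e where "x = {Orig u, Sub e}" "e \<in> path_edges n" "u \<in> e"
    | (l) v j where "x = {Orig v, Leaf v j}" "v \<le> n" "j < 3 - degree (path_edges n) v"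
    unfolding CP_edges_def clawed_edges_def path_vertices_def by auto
  then show "x \<in> cp.EE n"
  proof cases
    case s
    then obtain j where j: "e = {j, Suc j}" "j < n" unfolding path_edges_def by auto
    show ?thesis
    proof (cases "u = j")
      case True
      then have "x = cpe n j 2" using s j by (simp add: cpe_def)
      then show ?thesis using j by (auto intro: cp.ee_in)
    next
      case False
      then have "u = Suc j" using s j by auto
      then have "x = cpe n (Suc j) 1" using s j by (simp add: cpe_def insert_commute)
      then show ?thesis using j by (auto intro: cp.ee_in)
    qed
  next
    case l
    note d = deg_path[OF l(2)]
    have "j = 0 \<or> j = 1 \<or> j = 2" using l by arith
    moreover
    { assume "j = 0" then have "x = cpe n v 0" using l by (simp add: cpe_def) }
    moreover
    { assume j1: "j = 1"
      have "v = 0 \<or> (0 < v \<and> v = n)" using l j1 d by (auto split: if_splits)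
      then have "x = cpe n 0 1 \<or> x = cpe n v 2" using l j1 by (auto simp: cpe_def) }
    moreover
    { assume j2: "j = 2"
      have "v = 0 \<and> n = 0" using l j2 d by (auto split: if_splits)
      then have "x = cpe n v 2" using l j2 by (auto simp: cpe_def) }
    moreover have "cpe n v 0 \<in> cp.EE n" by (rule cp.ee_in) (use l in auto)
    moreover have "cpe n 0 1 \<in> cp.EE n" by (rule cp.ee_in) (use l in auto)
    moreover have "cpe n v 2 \<in> cp.EE n" by (rule cp.ee_in) (use l in auto)
    ultimately show ?thesis by blast
  qed
qed



lemma CP_sup: "cp.EE n \<subseteq> CP_edges n"
proof
  fix x assume "x \<in> cp.EE n"
  then obtain i k where ik: "i \<le> n" "k < 3" "x = cpe n i k" unfolding cp.EE_def by auto
  note d = deg_path[OF ik(1)]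
  have sub: "{Orig u, Sub e} \<in> CP_edges n" if "e \<in> path_edges n" "u \<in> e" for u e
    using that unfolding CP_edges_def clawed_edges_def by (intro UnI1) blast
  have lf: "{Orig v, Leaf v j} \<in> CP_edges n" if "v \<le> n" "j < 3 - degree (path_edges n) v" for v j
    using that unfolding CP_edges_def clawed_edges_def path_vertices_def by (intro UnI2) auto
  have "k = 0 \<or> k = 1 \<or> k = 2" using ik by arith
  moreover
  { assume "k = 0"
    then have "x = {Orig i, Leaf i 0}" using ik by (simp add: cpe_def)
    moreover have "0 < 3 - degree (path_edges n) i" using d by simp
    ultimately have "x \<in> CP_edges n" using lf ik(1) by simp }
  moreover
  { assume k: "k = 1"
    have "x \<in> CP_edges n"
    proof (cases "0 < i")
      case True
      have "{i - 1, i} \<in> path_edges n" unfolding path_edges_def using True ik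
        by (intro CollectI exI[of _ "i - 1"]) auto
      moreover have "x = {Orig i, Sub {i - 1, i}}" using True ik k by (simp add: cpe_def)
      ultimately show "x \<in> CP_edges n" using sub by simp
    next
      case False
      then have "x = {Orig i, Leaf i 1}" "1 < 3 - degree (path_edges n) i" using ik k d by (simp_all add: cpe_def)
      then show "x \<in> CP_edges n" using lf ik(1) by simp
    qed }
  moreover
  { assume k: "k = 2"
    have "x \<in> CP_edges n"
    proof (cases "i < n")
      case True
      have "{i, Suc i} \<in> path_edges n" unfolding path_edges_def using True by auto
      moreover have "x = {Orig i, Sub {i, Suc i}}" using True ik k by (simp add: cpe_def)
      ultimately show "x \<in> CP_edges n" using sub by simp
    next
      case False
      then have "x = {Orig i, Leaf i (if 0 < i then 1 else 2)}" "(if 0 < i then 1 else 2) < 3 - degree (path_edges n) i"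
        using ik k d by (simp_all add: cpe_def)
      then show "x \<in> CP_edges n" using lf ik(1) by simp
    qed }
  ultimately show "x \<in> CP_edges n" by blast
qed

lemma CP_eq: "CP_edges n = cp.EE n" using CP_sub CP_sup by blast


lemma CP_mem: "e \<in> CP_edges n \<Longrightarrow> (\<exists>u s. e = {Orig u, Sub s} \<and> s \<in> path_edges n \<and> u \<in> s) \<or> (\<exists>v j. e = {Orig v, Leaf v j})"
  unfolding CP_edges_def clawed_edges_def by blast

lemma card_le2: "finite A \<Longrightarrow> A \<subseteq> {a, b} \<Longrightarrow> card A \<le> 2"
proof -
  assume "finite A" "A \<subseteq> {a, b}"
  then have "card A \<le> card {a, b}" by (intro card_mono) auto
  also have "\<dots> \<le> 2" by (cases "a = b") auto
  finally show ?thesis .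
qed

lemma finite_CP: "finite (CP_edges n)" by (simp add: CP_eq cp.finite_EE)

lemma inc_Sub: "card {e \<in> CP_edges n. Sub s \<in> e} \<le> 2"
proof (cases "s \<in> path_edges n")
  case True
  then obtain j where s: "s = {j, Suc j}" unfolding path_edges_def by auto
  have "{e \<in> CP_edges n. Sub s \<in> e} \<subseteq> {{Orig j, Sub s}, {Orig (Suc j), Sub s}}"
  proof
    fix e assume e: "e \<in> {e \<in> CP_edges n. Sub s \<in> e}"
    then consider u s' where "e = {Orig u, Sub s'}" "s' \<in> path_edges n" "u \<in> s'"
      | v j' where "e = {Orig v, Leaf v j'}" using CP_mem by blast
    then show "e \<in> {{Orig j, Sub s}, {Orig (Suc j), Sub s}}"
    proof cases
      case 1 then show ?thesis using e s by auto
    next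
      case 2 then show ?thesis using e by auto
    qed
  qed
  then show ?thesis by (intro card_le2) (auto intro: finite_subset[OF _ finite_CP])
next
  case False
  have "{e \<in> CP_edges n. Sub s \<in> e} = {}"
  proof (rule ccontr)
    assume "{e \<in> CP_edges n. Sub s \<in> e} \<noteq> {}"
    then obtain e where e: "e \<in> CP_edges n" "Sub s \<in> e" by auto
    then consider u s' where "e = {Orig u, Sub s'}" "s' \<in> path_edges n" "u \<in> s'"
      | v j' where "e = {Orig v, Leaf v j'}" using CP_mem by blast
    then show False
    proof cases
      case 1 then show ?thesis using e False by auto
    next
      case 2 then show ?thesis using e by auto
    qed
  qed
  then show ?thesis by (metis card.empty le0)
qed

lemma inc_Leaf: "card {e \<in> CP_edges n. Leaf w j \<in> e} \<le> 2"
proof -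
  have "{e \<in> CP_edges n. Leaf w j \<in> e} \<subseteq> {{Orig w, Leaf w j}, {Orig w, Leaf w j}}"
  proof
    fix e assume e: "e \<in> {e \<in> CP_edges n. Leaf w j \<in> e}"
    then consider u s' where "e = {Orig u, Sub s'}" | v j' where "e = {Orig v, Leaf v j'}"
      using CP_mem by blast
    then show "e \<in> {{Orig w, Leaf w j}, {Orig w, Leaf w j}}"
    proof cases
      case 1 then show ?thesis using e by auto
    next
      case 2 then show ?thesis using e by auto
    qed
  qed
  then show ?thesis by (intro card_le2) (auto intro: finite_subset[OF _ finite_CP])
qed

lemma M2_eq: "two_matching_complex (CP_edges n) = cp.KK n"
proof (intro set_eqI iffI)
  fix F assume F: "F \<in> two_matching_complex (CP_edges n)"
  then have sub: "F \<subseteq> cp.EE n" and c: "\<And>v. card {e \<in> F. v \<in> e} \<le> 2"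
    by (auto simp: two_matching_complex_def CP_eq)
  have fin: "finite F" using sub cp.finite_EE finite_subset by blast
  have "\<forall>i\<le>n. \<exists>k<3. cpe n i k \<notin> F"
  proof (intro allI impI, rule ccontr)
    fix i assume i: "i \<le> n" and "\<not> (\<exists>k<3. cpe n i k \<notin> F)"
    then have all: "cpe n i 0 \<in> F" "cpe n i 1 \<in> F" "cpe n i 2 \<in> F" by auto
    have "{cpe n i 0, cpe n i 1, cpe n i 2} \<subseteq> {e \<in> F. Orig i \<in> e}"
      using all by (auto simp: cpe_Orig)
    moreover have "cpe n i 0 \<noteq> cpe n i 1" "cpe n i 0 \<noteq> cpe n i 2" "cpe n i 1 \<noteq> cpe n i 2"
      using cpe_inj[OF i _ i, of 0 1] cpe_inj[OF i _ i, of 0 2] cpe_inj[OF i _ i, of 1 2] by auto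
    then have "card {cpe n i 0, cpe n i 1, cpe n i 2} = 3" by simp
    ultimately have "3 \<le> card {e \<in> F. Orig i \<in> e}"
      by (metis (no_types, lifting) card_mono fin finite_subset mem_Collect_eq subsetI)
    with c[of "Orig i"] show False by simp
  qed
  then show "F \<in> cp.KK n" using sub by (simp add: cp.KK_def)
next
  fix F assume F: "F \<in> cp.KK n"
  then have sub: "F \<subseteq> cp.EE n" and miss: "\<And>i. i \<le> n \<Longrightarrow> \<exists>k<3. cpe n i k \<notin> F"
    by (auto simp: cp.KK_def)
  have fin: "finite F" using sub cp.finite_EE finite_subset by blast
  have "card {e \<in> F. v \<in> e} \<le> 2" for v
  proof (cases v)
    case (Orig i)
    show ?thesis
    proof (cases "i \<le> n")
      case True
      obtain k where k: "k < 3" "cpe n i k \<notin> F" using miss[OF True] by auto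
      have "k = 0 \<or> k = 1 \<or> k = 2" using k by arith
      have inc: "{e \<in> F. v \<in> e} \<subseteq> {cpe n i 0, cpe n i 1, cpe n i 2}"
      proof
        fix e assume e: "e \<in> {e \<in> F. v \<in> e}"
        then obtain i' k' where "i' \<le> n" "k' < 3" "e = cpe n i' k'" using sub by (auto simp: cp.EE_def)
        moreover have "k' = 0 \<or> k' = 1 \<or> k' = 2" using \<open>k' < 3\<close> by arith
        ultimately show "e \<in> {cpe n i 0, cpe n i 1, cpe n i 2}" using e Orig by (auto simp: cpe_Orig)
      qed
      have "k = 0 \<or> k = 1 \<or> k = 2" using k by arith
      then obtain a b where "{e \<in> F. v \<in> e} \<subseteq> {a, b}"
      proof (elim disjE)
        assume "k = 0" then show ?thesis using that[of "cpe n i 1" "cpe n i 2"] inc k by blast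
      next
        assume "k = 1" then show ?thesis using that[of "cpe n i 0" "cpe n i 2"] inc k by blast
      next
        assume "k = 2" then show ?thesis using that[of "cpe n i 0" "cpe n i 1"] inc k by blast
      qed
      then show ?thesis using fin by (intro card_le2) auto
    next
      case False
      have "{e \<in> F. v \<in> e} = {}"
      proof (rule ccontr)
        assume "{e \<in> F. v \<in> e} \<noteq> {}"
        then obtain e where e: "e \<in> F" "v \<in> e" by auto
        then obtain i' k' where "i' \<le> n" "e = cpe n i' k'" using sub by (auto simp: cp.EE_def)
        then show False using e Orig False by (auto simp: cpe_Orig)
      qed
      then show ?thesis by (metis card.empty le0)
    qed
  next
    case (Sub s)
    have "card {e \<in> F. v \<in> e} \<le> card {e \<in> CP_edges n. Sub s \<in> e}"
      using sub Sub by (intro card_mono) (auto simp: CP_eq cp.finite_EE)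
    then show ?thesis using inc_Sub[of n s] by simp
  next
    case (Leaf w j)
    have "card {e \<in> F. v \<in> e} \<le> card {e \<in> CP_edges n. Leaf w j \<in> e}"
      using sub Leaf by (intro card_mono) (auto simp: CP_eq cp.finite_EE)
    then show ?thesis using inc_Leaf[of n w j] by simp
  qed
  then show "F \<in> two_matching_complex (CP_edges n)"
    using sub by (simp add: two_matching_complex_def CP_eq)
qed

theorem mainTheorem10:
  fixes n :: nat
  shows "geometric_realization (two_matching_complex (CP_edges n))
           homotopy_equivalent_space nsphere (2 * n + 1)"
  unfolding M2_eq by (rule homeomorphic_imp_homotopy_equivalent_space[OF cp.main_abstract])

end
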